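(* For $1\le k\le n-1$, $\ell(w_k)=2k$, and for $1\le j,k\le n-1$ with $j\ne k$, $\ell(w_j\cdot w_k)=\ell(w_j)+\ell(w_k)=2(j+k)$.
   Context: $D_n$ ($n\ge2$) is the Coxeter group with generators $s_{1'},s_1,\dots,s_{n-1}$ and relations $s^2=1$, $(s_i s_{i+1})^3=1$, $(s_is_j)^2=1$ for $|i-j|\ge 2$, $(s_{1'}s_2)^3=1$, $(s_{1'}s_i)^2=1$ for $i\ne 2$. $\ell$ denotes Coxeter length with respect to $\{s_{1'},s_1,\dots,s_{n-1}\}$. $w_k=s_k s_{k-1}\cdots s_2 s_1 s_{1'} s_2\cdots s_k$. *)

theory Defs
  imports Main
begin

text \<open>Generators are encoded as
  natural numbers: 0 stands for s_{1'} and i (1 \<le> i \<le> n-1) stands for s_i.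
  Group elements are represented by words (lists of generators) modulo the
  congruence generated by the Coxeter relations.\<close>

definition gens :: "nat \<Rightarrow> nat set" where
  "gens n = {0..<n}"

text \<open>The relators r (meaning r = 1): s^2, (s_i s_{i+1})^3, (s_i s_j)^2 for |i-j| \<ge> 2,
  (s_{1'} s_2)^3, (s_{1'} s_i)^2 for i \<noteq> 2.\<close>
definition relators :: "nat \<Rightarrow> nat list set" where
  "relators n =
     {[s, s] | s. s \<in> gens n}
   \<union> {concat (replicate 3 [i, i + 1]) | i. 1 \<le> i \<and> i + 1 \<le> n - 1}
   \<union> {concat (replicate 2 [i, j]) | i j. 1 \<le> i \<and> i \<le> n - 1 \<and> 1 \<le> j \<and> j \<le> n - 1
                                         \<and> (i + 2 \<le> j \<or> j + 2 \<le> i)}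
   \<union> {concat (replicate 3 [0, 2]) | x::unit. 2 \<le> n - 1}
   \<union> {concat (replicate 2 [0, i]) | i. 1 \<le> i \<and> i \<le> n - 1 \<and> i \<noteq> 2}"

inductive cox_eq :: "nat \<Rightarrow> nat list \<Rightarrow> nat list \<Rightarrow> bool" for n where
  refl: "cox_eq n u u"
| sym: "cox_eq n u v \<Longrightarrow> cox_eq n v u"
| trans: "cox_eq n u v \<Longrightarrow> cox_eq n v w \<Longrightarrow> cox_eq n u w"
| rel: "r \<in> relators n \<Longrightarrow> cox_eq n (u @ r @ v) (u @ v)"

definition cox_len :: "nat \<Rightarrow> nat list \<Rightarrow> nat" where
  "cox_len n w = (LEAST m. \<exists>w'. set w' \<subseteq> gens n \<and> cox_eq n w w' \<and> length w' = m)"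

definition wk :: "nat \<Rightarrow> nat list" where
  "wk k = rev [2..<Suc k] @ [1, 0] @ [2..<Suc k]"

end

theory Submission
  imports Defs
begin

definition gen :: "nat \<Rightarrow> int \<Rightarrow> int" where
  "gen s x = (if s = 0 then
      (if x = 1 then -2 else if x = 2 then -1 else if x = -1 then 2 else if x = -2 then 1 else x)
    else (if x = int s then int s + 1 else if x = int s + 1 then int s
          else if x = - int s then - int s - 1 else if x = - int s - 1 then - int s else x))"

fun act :: "nat list \<Rightarrow> int \<Rightarrow> int" where
  "act [] = id"
| "act (s # w) = gen s \<circ> act w"

lemma act_append: "act (u @ v) = act u \<circ> act v"
  by (induction u) auto

lemma gen_inv: "gen s (gen s x) = x"
  by (simp add: gen_def)

lemma r1: "act [s, s] = id"
  by (simp add: fun_eq_iff gen_inv)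

lemma r2: "1 \<le> i \<Longrightarrow> gen i (gen (i+1) (gen i x)) = gen (i+1) (gen i (gen (i+1) x))"
  unfolding gen_def by auto

lemma r3: "1 \<le> i \<Longrightarrow> 1 \<le> j \<Longrightarrow> i + 2 \<le> j \<or> j + 2 \<le> i \<Longrightarrow> gen i (gen j x) = gen j (gen i x)"
  unfolding gen_def by auto

lemma r4: "gen 0 (gen 2 (gen 0 x)) = gen 2 (gen 0 (gen 2 x))"
  unfolding gen_def by auto

lemma r5: "1 \<le> i \<Longrightarrow> i \<noteq> 2 \<Longrightarrow> gen 0 (gen i x) = gen i (gen 0 x)"
  unfolding gen_def by auto

lemma q1: "1 \<le> i \<Longrightarrow> gen i (gen (Suc i) (gen i (gen (Suc i) (gen i (gen (Suc i) x))))) = x"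
  using r2[of i "gen (Suc i) x"] by (simp add: gen_inv)
lemma q2: "1 \<le> i \<Longrightarrow> 1 \<le> j \<Longrightarrow> i + 2 \<le> j \<or> j + 2 \<le> i \<Longrightarrow> gen i (gen j (gen i (gen j x))) = x"
  using r3[of i j "gen i (gen j x)"] by (simp add: gen_inv)
lemma q4: "gen 0 (gen 2 (gen 0 (gen 2 (gen 0 (gen 2 x))))) = x"
  using r4[of "gen 2 x"] by (simp add: gen_inv)
lemma q5: "1 \<le> i \<Longrightarrow> i \<noteq> 2 \<Longrightarrow> gen 0 (gen i (gen 0 (gen i x))) = x"
  using r5[of i "gen 0 (gen i x)"] by (simp add: gen_inv)

lemma rel_id: "r \<in> relators n \<Longrightarrow> act r = id"
  unfolding relators_def
  apply (elim UnE)
  apply (auto simp: numeral_3_eq_3 numeral_2_eq_2 gens_def fun_eq_iff gen_inv q1 q2 q4[simplified numeral_2_eq_2] q5)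
  done

lemma cox_act: "cox_eq n u v \<Longrightarrow> act u = act v"
  by (induction rule: cox_eq.induct) (auto simp: act_append rel_id)

lemma gen_odd: "gen s (-x) = - gen s x"
  by (auto simp: gen_def)

lemma gen_inj: "inj (gen s)"
  by (metis gen_inv injI)

lemma act_odd: "act w (-x) = - act w x"
  by (induction w arbitrary: x) (auto simp: gen_odd)

lemma act_inj: "inj (act w)"
  apply (induction w)
   apply simp
  apply (simp only: act.simps)
  apply (rule inj_compose[OF gen_inj])
  apply assumption
  done

definition S :: "nat \<Rightarrow> int set" where
  "S n = {- int n..int n} - {0}"

definition P :: "nat \<Rightarrow> (int \<Rightarrow> int) \<Rightarrow> (int \<times> int) set" where
  "P n f = {(x,y) \<in> S n \<times> S n. x < y \<and> x \<noteq> -y \<and> f y < f x}"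

definition pts :: "nat \<Rightarrow> (int \<Rightarrow> int) \<Rightarrow> int \<Rightarrow> int \<Rightarrow> (int \<times> int) set" where
  "pts n f p q = {(x,y) \<in> S n \<times> S n. f x = p \<and> f y = q}"

lemma finite_S: "finite (S n)" by (simp add: S_def)

lemma pts_card: "inj f \<Longrightarrow> card (pts n f p q) \<le> 1"
proof -
  assume "inj f"
  have "finite (pts n f p q)" unfolding pts_def
    by (rule finite_subset[of _ "S n \<times> S n"]) (auto simp: finite_S)
  moreover have "\<forall>a1\<in>pts n f p q. \<forall>a2\<in>pts n f p q. a1 = a2"
    using \<open>inj f\<close> by (auto simp: pts_def dest: injD)
  ultimately show ?thesis using card_le_Suc0_iff_eq by auto
qed

lemma flip: "u \<noteq> 0 \<Longrightarrow> v \<noteq> 0 \<Longrightarrow> u < v \<Longrightarrow> u \<noteq> -v \<Longrightarrow> gen s v < gen s u \<Longrightarrow>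
   (s = 0 \<and> ((u = -2 \<and> v = 1) \<or> (u = -1 \<and> v = 2))) \<or>
   (s \<noteq> 0 \<and> ((u = int s \<and> v = int s + 1) \<or> (u = - int s - 1 \<and> v = - int s)))"
  by (auto simp: gen_def split: if_splits)

lemma lip:
  assumes inj: "inj f" and odd: "\<And>x. f (-x) = - f x"
  shows "card (P n (gen s \<circ> f)) \<le> card (P n f) + 2"
proof -
  define p1 where "p1 = (if s = 0 then (-2::int) else int s)"
  define q1 where "q1 = (if s = 0 then (1::int) else int s + 1)"
  define p2 where "p2 = (if s = 0 then (-1::int) else - int s - 1)"
  define q2 where "q2 = (if s = 0 then (2::int) else - int s)"
  have sub: "P n (gen s \<circ> f) \<subseteq> P n f \<union> pts n f p1 q1 \<union> pts n f p2 q2"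
  proof
    fix z assume z: "z \<in> P n (gen s \<circ> f)"
    obtain x y where xy: "z = (x,y)" by force
    show "z \<in> P n f \<union> pts n f p1 q1 \<union> pts n f p2 q2"
    proof (cases "f y < f x")
      case True then show ?thesis using z xy by (auto simp: P_def)
    next
      case False
      have "x \<noteq> y" "x \<noteq> -y" using z xy by (auto simp: P_def)
      then have "f x \<noteq> f y" "f x \<noteq> - f y" using inj odd by (auto dest: injD) (metis injD inj)
      then have lt: "f x < f y" using False by auto
      have f0: "f 0 = 0" using odd[of 0] by simp
      have "x \<noteq> 0" "y \<noteq> 0" using z xy by (auto simp: P_def S_def)
      then have "f x \<noteq> 0" "f y \<noteq> 0" using f0 inj by (metis injD)+
      then have "(s = 0 \<and> ((f x = -2 \<and> f y = 1) \<or> (f x = -1 \<and> f y = 2))) \<or>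
   (s \<noteq> 0 \<and> ((f x = int s \<and> f y = int s + 1) \<or> (f x = - int s - 1 \<and> f y = - int s)))"
        using flip[of "f x" "f y" s] z xy \<open>f x \<noteq> - f y\<close> lt \<open>f x \<noteq> 0\<close> \<open>f y \<noteq> 0\<close>
        by (auto simp: P_def)
      then show ?thesis using z xy by (auto simp: P_def pts_def p1_def q1_def p2_def q2_def)
    qed
  qed
  have fin: "finite (P n f \<union> pts n f p1 q1 \<union> pts n f p2 q2)"
    by (rule finite_subset[of _ "S n \<times> S n"]) (auto simp: finite_S P_def pts_def)
  have "card (P n (gen s \<circ> f)) \<le> card (P n f \<union> pts n f p1 q1 \<union> pts n f p2 q2)"
    using card_mono[OF fin sub] .
  also have "\<dots> \<le> card (P n f) + card (pts n f p1 q1) + card (pts n f p2 q2)"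
    by (meson add_right_mono card_Un_le le_trans)
  finally show ?thesis using pts_card[OF inj, of n p1 q1] pts_card[OF inj, of n p2 q2] by linarith
qed

lemma P_act: "card (P n (act w)) \<le> 2 * length w"
proof (induction w)
  case Nil
  have "P n (act []) = {}" by (auto simp: P_def)
  then show ?case by (metis card.empty le0)
next
  case (Cons s w)
  have "card (P n (act (s#w))) \<le> card (P n (act w)) + 2"
    using lip[OF act_inj act_odd, of n s w] by (simp only: act.simps)
  then show ?case using Cons by (simp del: act.simps)
qed

lemma lower: "set w \<subseteq> gens n \<Longrightarrow> card (P n (act w)) \<le> 2 * cox_len n w"
proof -
  assume "set w \<subseteq> gens n"
  then have ex: "\<exists>m w'. set w' \<subseteq> gens n \<and> cox_eq n w w' \<and> length w' = m"
    by (blast intro: cox_eq.refl)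
  obtain w' where "set w' \<subseteq> gens n" "cox_eq n w w'" "length w' = cox_len n w"
    using LeastI_ex[OF ex] unfolding cox_len_def by blast
  then show ?thesis using P_act[of n w'] cox_act by metis
qed

lemma upper: "set w \<subseteq> gens n \<Longrightarrow> cox_len n w \<le> length w"
  unfolding cox_len_def by (rule Least_le) (blast intro: cox_eq.refl)

definition N :: "int \<Rightarrow> int \<Rightarrow> int \<Rightarrow> int" where
  "N a b x = (if x = a \<or> x = -a \<or> x = b \<or> x = -b then -x else x)"

lemma wk_Suc: "1 \<le> k \<Longrightarrow> wk (Suc k) = Suc k # wk k @ [Suc k]"
  by (simp add: wk_def)

lemma act_wk: "1 \<le> k \<Longrightarrow> act (wk k) = N 1 (int k + 1)"
proof (induction k rule: nat_induct_at_least)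
  case base
  show ?case by (auto simp: wk_def fun_eq_iff gen_def N_def)
next
  case (Suc k)
  have "act (wk (Suc k)) = gen (Suc k) \<circ> N 1 (int k + 1) \<circ> gen (Suc k)"
    using Suc by (simp add: wk_Suc act_append o_assoc)
  also have "\<dots> = N 1 (int (Suc k) + 1)"
    using Suc by (auto simp: fun_eq_iff gen_def N_def)
  finally show ?case .
qed

lemma len_wk: "1 \<le> k \<Longrightarrow> length (wk k) = 2 * k"
  by (simp add: wk_def; arith)

lemma set_wk: "1 \<le> k \<Longrightarrow> k \<le> n - 1 \<Longrightarrow> n \<ge> 2 \<Longrightarrow> set (wk k) \<subseteq> gens n"
  by (auto simp: wk_def gens_def)

definition R :: "int \<Rightarrow> int set" where
  "R m = {-m..m} - {0}"

lemma card_R: "m \<ge> 0 \<Longrightarrow> card (R m) = nat (2 * m)"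
proof -
  assume "m \<ge> 0"
  have "card (R m) = card {-m..m} - 1" unfolding R_def
    using \<open>m \<ge> 0\<close> by (simp add: card_Diff_singleton)
  then show ?thesis using \<open>m \<ge> 0\<close> by simp
qed

lemma P_N:
  assumes ab: "1 \<le> a" "a < b" "b \<le> int n"
  shows "4 * (a + b - 2) \<le> int (card (P n (N a b)))"
proof -
  define Yb where "Yb = (\<lambda>x. (x, b)) ` R (b - 1)"
  define Xb where "Xb = (\<lambda>y. (-b, y)) ` R (b - 1)"
  define Ya where "Ya = (\<lambda>x. (x, a)) ` R (a - 1)"
  define Xa where "Xa = (\<lambda>y. (-a, y)) ` R (a - 1)"
  have cYb: "card Yb = nat (2 * (b - 1))" unfolding Yb_def
    by (subst card_image) (use card_R[of "b - 1"] ab in \<open>auto intro: inj_onI\<close>)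
  have cXb: "card Xb = nat (2 * (b - 1))" unfolding Xb_def
    by (subst card_image) (use card_R[of "b - 1"] ab in \<open>auto intro: inj_onI\<close>)
  have cYa: "card Ya = nat (2 * (a - 1))" unfolding Ya_def
    by (subst card_image) (use card_R[of "a - 1"] ab in \<open>auto intro: inj_onI\<close>)
  have cXa: "card Xa = nat (2 * (a - 1))" unfolding Xa_def
    by (subst card_image) (use card_R[of "a - 1"] ab in \<open>auto intro: inj_onI\<close>)
  have fin: "finite Yb" "finite Xb" "finite Ya" "finite Xa"
    by (auto simp: Yb_def Xb_def Ya_def Xa_def R_def)
  have d1: "Yb \<inter> Xb = {}" using ab by (auto simp: Yb_def Xb_def R_def)
  have d2: "(Yb \<union> Xb) \<inter> Ya = {}" using ab by (auto simp: Yb_def Xb_def Ya_def R_def)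
  have d3: "(Yb \<union> Xb \<union> Ya) \<inter> Xa = {}" using ab by (auto simp: Yb_def Xb_def Ya_def Xa_def R_def)
  have cU: "card (Yb \<union> Xb \<union> Ya \<union> Xa) = card Yb + card Xb + card Ya + card Xa"
    using fin d1 d2 d3 by (simp add: card_Un_disjoint)
  have sub: "Yb \<union> Xb \<union> Ya \<union> Xa \<subseteq> P n (N a b)"
    using ab by (auto simp: Yb_def Xb_def Ya_def Xa_def R_def P_def S_def N_def)
  have finP: "finite (P n (N a b))"
    by (rule finite_subset[of _ "S n \<times> S n"]) (auto simp: finite_S P_def)
  have "card (Yb \<union> Xb \<union> Ya \<union> Xa) \<le> card (P n (N a b))"
    using card_mono[OF finP sub] .
  then have "card Yb + card Xb + card Ya + card Xa \<le> card (P n (N a b))" using cU by simp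
  then have "int (card Yb + card Xb + card Ya + card Xa) \<le> int (card (P n (N a b)))"
    using of_nat_mono by blast
  moreover have "int (card Yb + card Xb + card Ya + card Xa) = 4 * (a + b - 2)"
    using cYb cXb cYa cXa ab by simp
  ultimately show ?thesis by linarith
qed

lemma N_sym: "N a b = N b a"
  by (auto simp: fun_eq_iff N_def)

lemma P_N': "1 \<le> a \<Longrightarrow> 1 \<le> b \<Longrightarrow> a \<noteq> b \<Longrightarrow> a \<le> int n \<Longrightarrow> b \<le> int n \<Longrightarrow>
  4 * (a + b - 2) \<le> int (card (P n (N a b)))"
  by (metis P_N N_sym add.commute linorder_neq_iff)

lemma arith_aux:
  fixes m c L :: nat
  assumes "4 * int m \<le> int c" "c \<le> 2 * L" "L \<le> 2 * m"
  shows "L = 2 * m"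
proof -
  have "4 * m \<le> c" using assms(1) by linarith
  then show ?thesis using assms(2,3) by linarith
qed

lemma single:
  assumes "n \<ge> 2" "1 \<le> k" "k \<le> n - 1"
  shows "cox_len n (wk k) = 2 * k"
proof -
  have s: "set (wk k) \<subseteq> gens n" using set_wk assms by blast
  have u: "cox_len n (wk k) \<le> 2 * k" using upper[OF s] len_wk assms by simp
  have "4 * (1 + (int k + 1) - 2) \<le> int (card (P n (N 1 (int k + 1))))"
    using assms by (intro P_N) auto
  moreover have "card (P n (N 1 (int k + 1))) \<le> 2 * cox_len n (wk k)"
    using lower[OF s] act_wk assms by simp
  ultimately show ?thesis using u arith_aux[of k] by simp
qed

lemma double:
  assumes "n \<ge> 2" "1 \<le> j" "j \<le> n - 1" "1 \<le> k" "k \<le> n - 1" "j \<noteq> k"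
  shows "cox_len n (wk j @ wk k) = 2 * (j + k)"
proof -
  have s: "set (wk j @ wk k) \<subseteq> gens n" using set_wk assms by auto
  have u: "cox_len n (wk j @ wk k) \<le> 2 * (j + k)" using upper[OF s] len_wk assms by simp
  have a: "act (wk j @ wk k) = N (int j + 1) (int k + 1)"
    using assms by (auto simp: act_append act_wk fun_eq_iff N_def)
  have "4 * ((int j + 1) + (int k + 1) - 2) \<le> int (card (P n (N (int j + 1) (int k + 1))))"
    using assms by (intro P_N') auto
  moreover have "card (P n (N (int j + 1) (int k + 1))) \<le> 2 * cox_len n (wk j @ wk k)"
    using lower[OF s] a by simp
  ultimately show ?thesis using u arith_aux[of "j + k"] by simp
qed

theorem mainTheorem11:
  fixes n :: nat
  assumes "n \<ge> 2"
  shows "(\<forall>k. 1 \<le> k \<and> k \<le> n - 1 \<longrightarrow> cox_len n (wk k) = 2 * k)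
       \<and> (\<forall>j k. 1 \<le> j \<and> j \<le> n - 1 \<and> 1 \<le> k \<and> k \<le> n - 1 \<and> j \<noteq> k \<longrightarrow>
            cox_len n (wk j @ wk k) = cox_len n (wk j) + cox_len n (wk k)
          \<and> cox_len n (wk j) + cox_len n (wk k) = 2 * (j + k))"
  using single[OF assms] double[OF assms] by auto

end
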